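(* In the two-SP bandwidth game with minimum small-cell bandwidth constraints $B_{i,S}\ge B_{i,S}^0$ (described in the context), there exists a unique pure-strategy Nash equilibrium $(B_{1,S}^*,B_{2,S}^* )$. Moreover, the total small-cell bandwidth at this equilibrium is no less than that at the unconstrained equilibrium: $$B_{1,S}^*+B_{2,S}^*\ \ge\ B_{1,S}^{\mathrm{free}}+B_{2,S}^{\mathrm{free}}=\frac{\epsilon N_f(B_1+B_2)}{\epsilon N_f+N_m}.$$
   Context: Fixed parameters: $\alpha\in(0,1)$; densities $N_m>0$ (mobile users) and $N_f>0$ (fixed users); spectral efficiency $R_0>0$; common small-cell density $\lambda_S>1$ (macro density normalized to 1); total bandwidths $B_1,B_2>0$; regulatory lower bounds $B_{i,S}^0\in[0,B_i]$. Utility $u(r)=\frac{r^{1-\alpha}}{1-\alpha}$, $u'(r)=r^{-\alpha}$. Let $\epsilon=\lambda_S^{1/\alpha-1}$. Two-SP bandwidth game: SP $i\in\{1,2\}$ chooses small-cell bandwidth $B_{i,S}\in[B_{i,S}^0,B_i]$ and sets $B_{i,M}=B_i-B_{i,S}$. Given a profile, prices are market-clearing, mobile users use macro-cells and fixed users use small-cells, so the average rates are $R_S=\frac{\lambda_S(B_{1,S}+B_{2,S})R_0}{N_f}$ and $R_M=\frac{(B_{1,M}+B_{2,M})R_0}{N_m}$, and SP $i$'s payoff (revenue) is $S_i=R_0B_{i,M}R_M^{-\alpha}+R_0\lambda_SB_{i,S}R_S^{-\alpha}$ (a term with zero bandwidth is $0$). Define $B_{i,S}^{\mathrm{free}}=\frac{\epsilon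 N_fB_i}{\epsilon N_f+N_m}$, the equilibrium small-cell bandwidth of SP $i$ when there are no constraints ($B_{i,S}^0=0$). *)

theory Defs
  imports Complex_Main
begin

text \<open>Parameters: alpha, Nm (mobile user density), Nf (fixed user
density), R0 (spectral efficiency), lamS (small-cell density), B1, B2 (total bandwidths).
Strategies: x1 = B_{1,S}, x2 = B_{2,S}; macro bandwidths are B_i - x_i.\<close>

definition rate_S :: "real \<Rightarrow> real \<Rightarrow> real \<Rightarrow> real \<Rightarrow> real \<Rightarrow> real" where
  "rate_S Nf R0 lamS x1 x2 = lamS * (x1 + x2) * R0 / Nf"

definition rate_M :: "real \<Rightarrow> real \<Rightarrow> real \<Rightarrow> real \<Rightarrow> real \<Rightarrow> real \<Rightarrow> real" where
  "rate_M Nm R0 B1 B2 x1 x2 = ((B1 - x1) + (B2 - x2)) * R0 / Nm"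

definition revenue :: "real \<Rightarrow> real \<Rightarrow> real \<Rightarrow> real \<Rightarrow> real \<Rightarrow> real \<Rightarrow> real \<Rightarrow> real" where
  "revenue alpha R0 lamS RM RS xm xs =
     (if xm = 0 then 0 else R0 * xm * RM powr (- alpha))
   + (if xs = 0 then 0 else R0 * lamS * xs * RS powr (- alpha))"

definition payoff1 :: "real \<Rightarrow> real \<Rightarrow> real \<Rightarrow> real \<Rightarrow> real \<Rightarrow> real \<Rightarrow> real \<Rightarrow> real \<Rightarrow> real \<Rightarrow> real" where
  "payoff1 alpha Nm Nf R0 lamS B1 B2 x1 x2 =
     revenue alpha R0 lamS (rate_M Nm R0 B1 B2 x1 x2) (rate_S Nf R0 lamS x1 x2) (B1 - x1) x1"

definition payoff2 :: "real \<Rightarrow> real \<Rightarrow> real \<Rightarrow> real \<Rightarrow> real \<Rightarrow> real \<Rightarrow> real \<Rightarrow> real \<Rightarrow> real \<Rightarrow> real" where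
  "payoff2 alpha Nm Nf R0 lamS B1 B2 x1 x2 =
     revenue alpha R0 lamS (rate_M Nm R0 B1 B2 x1 x2) (rate_S Nf R0 lamS x1 x2) (B2 - x2) x2"

definition is_NE :: "real \<Rightarrow> real \<Rightarrow> real \<Rightarrow> real \<Rightarrow> real \<Rightarrow> real \<Rightarrow> real \<Rightarrow> real \<Rightarrow> real \<Rightarrow> real \<times> real \<Rightarrow> bool" where
  "is_NE alpha Nm Nf R0 lamS B1 B2 B10 B20 p \<longleftrightarrow>
     (case p of (x1, x2) \<Rightarrow>
       x1 \<in> {B10..B1} \<and> x2 \<in> {B20..B2} \<and>
       (\<forall>y \<in> {B10..B1}. payoff1 alpha Nm Nf R0 lamS B1 B2 y x2 \<le> payoff1 alpha Nm Nf R0 lamS B1 B2 x1 x2) \<and>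
       (\<forall>y \<in> {B20..B2}. payoff2 alpha Nm Nf R0 lamS B1 B2 x1 y \<le> payoff2 alpha Nm Nf R0 lamS B1 B2 x1 x2))"

definition eps_param :: "real \<Rightarrow> real \<Rightarrow> real" where
  "eps_param alpha lamS = lamS powr (1 / alpha - 1)"

definition B_free :: "real \<Rightarrow> real \<Rightarrow> real \<Rightarrow> real \<Rightarrow> real \<Rightarrow> real" where
  "B_free alpha Nm Nf lamS Bi = eps_param alpha lamS * Nf * Bi / (eps_param alpha lamS * Nf + Nm)"

end

theory Submission
  imports Defs
begin

locale game =
  fixes a cM cS :: real
  assumes a0: "0 < a" and a1: "a < 1" and cM0: "0 < cM" and cS0: "0 < cS"
begin

definition Q :: "real \<Rightarrow> real \<Rightarrow> real \<Rightarrow> real \<Rightarrow> real" where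
  "Q Bi y Bj xj = cM*(Bi-y)*(Bi-y+(Bj-xj)) powr (-a) + cS*y*(y+xj) powr (-a)"

definition Hf :: "real \<Rightarrow> real \<Rightarrow> real \<Rightarrow> real \<Rightarrow> real" where
  "Hf S M s u = cS * S powr (-a) * (1 - a*s) - cM * M powr (-a) * (1 - a*u)"

definition G :: "real \<Rightarrow> real \<Rightarrow> real \<Rightarrow> real \<Rightarrow> real" where
  "G Bi y Bj xj = Hf (y+xj) (Bi-y+(Bj-xj)) (y/(y+xj)) ((Bi-y)/(Bi-y+(Bj-xj)))"

lemma Q_deriv:
  assumes "0 < y + xj" "0 < Bi - y + (Bj - xj)"
  shows "((\<lambda>y. Q Bi y Bj xj) has_real_derivative G Bi y Bj xj) (at y)"
proof -
  have "((\<lambda>y. Q Bi y Bj xj) has_real_derivative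
     cM*((-1)*(Bi-y+(Bj-xj)) powr (-a) + (Bi-y)*((-a) * (Bi-y+(Bj-xj)) powr (-a - 1) * (-1)))
   + cS*(1*(y+xj) powr (-a) + y*((-a) * (y+xj) powr (-a-1) * 1))) (at y)"
    unfolding Q_def using assms
    by (auto intro!: derivative_eq_intros simp: algebra_simps)
  moreover have "(Bi-y+(Bj-xj)) powr (-a - 1) = (Bi-y+(Bj-xj)) powr (-a) / (Bi-y+(Bj-xj))"
    using assms by (simp add: powr_diff)
  moreover have "(y+xj) powr (-a - 1) = (y+xj) powr (-a) / (y+xj)"
    using assms by (simp add: powr_diff)
  moreover have "cM*((-1)*(Bi-y+(Bj-xj)) powr (-a) + (Bi-y)*((-a) * ((Bi-y+(Bj-xj)) powr (-a) / (Bi-y+(Bj-xj))) * (-1)))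
   + cS*(1*(y+xj) powr (-a) + y*((-a) * ((y+xj) powr (-a) / (y+xj)) * 1)) = G Bi y Bj xj"
    unfolding G_def Hf_def using assms by (simp add: field_simps)
  ultimately show ?thesis by simp
qed

lemma cont_helper:
  assumes "0 \<le> c"
  shows "continuous_on {0..} (\<lambda>u::real. u*(u+c) powr (-a))"
proof (cases "c = 0")
  case True
  have "continuous_on {0..} (\<lambda>u::real. u powr (1-a))"
    by (rule continuous_on_powr') (use a1 in \<open>auto intro!: continuous_intros\<close>)
  moreover have "\<And>u::real. u \<in> {0..} \<Longrightarrow> u powr (1-a) = u*(u+c) powr (-a)"
  proof -
    fix u :: real assume "u \<in> {0..}"
    then show "u powr (1-a) = u*(u+c) powr (-a)"
      using True by (cases "u = 0") (auto simp: powr_diff powr_minus divide_inverse)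
  qed
  ultimately show ?thesis using continuous_on_cong[of "{0..}" "{0..}" "\<lambda>u::real. u powr (1-a)" "\<lambda>u. u*(u+c) powr (-a)"] by simp
next
  case False
  then show ?thesis using assms
    by (auto intro!: continuous_intros)
qed

lemma Q_cont:
  assumes "0 \<le> xj" "xj \<le> Bj" "0 \<le> lo" "hi \<le> Bi"
  shows "continuous_on {lo..hi} (\<lambda>y. Q Bi y Bj xj)"
proof -
  have c1: "continuous_on {lo..hi} (\<lambda>y. (Bi - y)*((Bi-y)+(Bj-xj)) powr (-a))"
  proof -
    have "continuous_on {lo..hi} ((\<lambda>u. u*(u+(Bj-xj)) powr (-a)) \<circ> (\<lambda>y. Bi - y))"
      apply (rule continuous_on_compose)
       apply (auto intro!: continuous_intros)[1]
      apply (rule continuous_on_subset[OF cont_helper])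
      using assms by auto
    then show ?thesis by (simp add: o_def)
  qed
  have c2: "continuous_on {lo..hi} (\<lambda>y. y*(y+xj) powr (-a))"
    apply (rule continuous_on_subset[OF cont_helper])
    using assms by auto
  show ?thesis unfolding Q_def
    using c1 c2 by (auto intro!: continuous_intros simp: mult.assoc)
qed

lemma Hmono:
  assumes "0 < S" "S \<le> S'" "0 < M'" "M' \<le> M" "0 \<le> s" "s \<le> s'" "s' \<le> 1"
    "0 \<le> u'" "u' \<le> u" "u \<le> 1"
  shows "Hf S' M' s' u' \<le> Hf S M s u"
    and "S < S' \<or> M' < M \<or> s < s' \<or> u' < u \<Longrightarrow> Hf S' M' s' u' < Hf S M s u"
proof -
  have p: "S' powr (-a) \<le> S powr (-a)" using assms a0 by (intro powr_mono2') auto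
  have q: "M powr (-a) \<le> M' powr (-a)" using assms a0 by (intro powr_mono2') auto
  have p0: "0 < S' powr (-a)" using assms by auto
  have q0: "0 < M powr (-a)" using assms by auto
  have t1: "1 - a*s' \<le> 1 - a*s" using assms a0 by (simp add: mult_left_mono)
  have "a*s' \<le> a*1" using assms a0 by (intro mult_left_mono) auto
  then have t1p: "0 < 1 - a*s'" using a1 by simp
  have t2: "1 - a*u \<le> 1 - a*u'" using assms a0 by (simp add: mult_left_mono)
  have "a*u \<le> a*1" using assms a0 by (intro mult_left_mono) auto
  then have t2p: "0 < 1 - a*u" using a1 by simp
  have A: "cS * S' powr (-a) * (1 - a*s') \<le> cS * S powr (-a) * (1 - a*s)"
    using p t1 p0 t1p cS0 by (intro mult_mono) auto
  have B: "cM * M powr (-a) * (1 - a*u) \<le> cM * M' powr (-a) * (1 - a*u')"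
    using q t2 q0 t2p cM0 by (intro mult_mono) auto
  show "Hf S' M' s' u' \<le> Hf S M s u" unfolding Hf_def using A B by linarith
  assume "S < S' \<or> M' < M \<or> s < s' \<or> u' < u"
  have key: "\<And>P P' t t' :: real. 0 < P' \<Longrightarrow> P' \<le> P \<Longrightarrow> 0 < t' \<Longrightarrow> t' \<le> t \<Longrightarrow> (P' < P \<or> t' < t) \<Longrightarrow> P' * t' < P * t"
  proof -
    fix P P' t t' :: real
    assume h: "0 < P'" "P' \<le> P" "0 < t'" "t' \<le> t" "P' < P \<or> t' < t"
    show "P' * t' < P * t"
    proof (cases "P' < P")
      case True
      have "P' * t' \<le> P' * t" using h by (intro mult_left_mono) auto
      also have "\<dots> < P * t" using h True by (intro mult_strict_right_mono) auto
      finally show ?thesis .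
    next
      case False
      then have "t' < t" using h by auto
      then have "P' * t' < P' * t" using h by (intro mult_strict_left_mono) auto
      also have "\<dots> \<le> P * t" using h by (intro mult_right_mono) auto
      finally show ?thesis .
    qed
  qed
  have "cS * S' powr (-a) * (1 - a*s') < cS * S powr (-a) * (1 - a*s)
       \<or> cM * M powr (-a) * (1 - a*u) < cM * M' powr (-a) * (1 - a*u')"
  proof (cases "S < S' \<or> s < s'")
    case True
    have "S < S' \<Longrightarrow> S' powr (-a) < S powr (-a)" using assms a0 by (intro powr_less_mono2_neg) auto
    moreover have "s < s' \<Longrightarrow> 1 - a*s' < 1 - a*s" using a0 by simp
    ultimately have "cS * S' powr (-a) < cS * S powr (-a) \<or> 1 - a*s' < 1 - a*s"
      using True cS0 by auto
    then show ?thesis using key[of "cS * S' powr (-a)" "cS * S powr (-a)" "1 - a*s'" "1 - a*s"]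
      p t1 p0 t1p cS0 by (auto intro: mult_left_mono)
  next
    case False
    then have F: "M' < M \<or> u' < u" using \<open>S < S' \<or> M' < M \<or> s < s' \<or> u' < u\<close> by auto
    have "M' < M \<Longrightarrow> M powr (-a) < M' powr (-a)" using assms a0 by (intro powr_less_mono2_neg) auto
    moreover have "u' < u \<Longrightarrow> 1 - a*u < 1 - a*u'" using a0 by simp
    ultimately have "cM * M powr (-a) < cM * M' powr (-a) \<or> 1 - a*u < 1 - a*u'"
      using F cM0 by auto
    then show ?thesis using key[of "cM * M powr (-a)" "cM * M' powr (-a)" "1 - a*u" "1 - a*u'"]
      q t2 q0 t2p cM0 by (auto intro: mult_left_mono)
  qed
  then show "Hf S' M' s' u' < Hf S M s u" unfolding Hf_def using A B by linarith
qed

lemma frac_mono: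
  fixes t t' c :: real
  assumes "0 \<le> t" "t \<le> t'" "0 \<le> c" "0 < t + c"
  shows "t/(t+c) \<le> t'/(t'+c)"
proof -
  have "t*(t'+c) \<le> t'*(t+c)" using assms by (simp add: algebra_simps mult_left_mono)
  then show ?thesis using assms by (simp add: divide_simps)
qed

lemma frac_strict_mono:
  fixes t t' c :: real
  assumes "0 \<le> t" "t < t'" "0 < c"
  shows "t/(t+c) < t'/(t'+c)"
proof -
  have "t*(t'+c) < t'*(t+c)" using assms by (simp add: algebra_simps mult_strict_right_mono)
  then show ?thesis using assms by (simp add: divide_simps)
qed

lemma G_strict_mono:
  assumes "0 \<le> y1" "y1 < y2" "y2 \<le> Bi" "0 \<le> xj" "xj \<le> Bj" "0 < y1 + xj"
    "0 < Bi - y2 + (Bj - xj)"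
  shows "G Bi y2 Bj xj < G Bi y1 Bj xj"
  unfolding G_def
proof (rule Hmono(2))
  show "y1 / (y1 + xj) \<le> y2 / (y2 + xj)" using assms by (intro frac_mono) auto
  have "(Bi - y2) / ((Bi - y2) + (Bj - xj)) \<le> (Bi - y1) / ((Bi - y1) + (Bj - xj))"
    using assms by (intro frac_mono) auto
  then show "(Bi - y2) / (Bi - y2 + (Bj - xj)) \<le> (Bi - y1) / (Bi - y1 + (Bj - xj))" by simp
qed (use assms in \<open>auto simp: divide_simps\<close>)

lemma NEC_up:
  assumes max: "\<forall>y\<in>{L..Bi}. Q Bi y Bj xj \<le> Q Bi y0 Bj xj"
    and "L \<le> y0" "y0 < Bi" "0 < y0 + xj" "0 < Bi - y0 + (Bj - xj)"
  shows "G Bi y0 Bj xj \<le> 0"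
proof (rule ccontr)
  assume "\<not> ?thesis"
  then obtain d where d: "d > 0" "\<forall>h>0. h < d \<longrightarrow> Q Bi y0 Bj xj < Q Bi (y0 + h) Bj xj"
    using DERIV_pos_inc_right[OF Q_deriv[OF assms(4,5)]] by auto
  define h where "h = min d (Bi - y0) / 2"
  have m: "min d (Bi - y0) \<le> Bi - y0" "min d (Bi - y0) \<le> d" "min d (Bi - y0) > 0" using d assms by auto
  have "h > 0" "h < d" "L \<le> y0 + h" "y0 + h \<le> Bi" using m assms h_def by auto
  then have "h > 0" "h < d" "y0 + h \<in> {L..Bi}" by auto
  then show False using d max by fastforce
qed

lemma NEC_down:
  assumes max: "\<forall>y\<in>{L..Bi}. Q Bi y Bj xj \<le> Q Bi y0 Bj xj"
    and "L < y0" "y0 \<le> Bi" "0 < y0 + xj" "0 < Bi - y0 + (Bj - xj)"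
  shows "0 \<le> G Bi y0 Bj xj"
proof (rule ccontr)
  assume "\<not> ?thesis"
  then obtain d where d: "d > 0" "\<forall>h>0. h < d \<longrightarrow> Q Bi y0 Bj xj < Q Bi (y0 - h) Bj xj"
    using DERIV_neg_dec_left[OF Q_deriv[OF assms(4,5)]] by auto
  define h where "h = min d (y0 - L) / 2"
  have m: "min d (y0 - L) \<le> y0 - L" "min d (y0 - L) \<le> d" "min d (y0 - L) > 0" using d assms by auto
  have "h > 0" "h < d" "L \<le> y0 - h" "y0 - h \<le> Bi" using m assms h_def by auto
  then have "h > 0" "h < d" "y0 - h \<in> {L..Bi}" by auto
  then show False using d max by fastforce
qed

lemma SUFF:
  assumes "0 \<le> L" "L \<le> y0" "y0 \<le> Bi" "0 \<le> xj" "xj \<le> Bj" "0 < y0 + xj"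
    "0 < Bi - y0 + (Bj - xj)"
    and up: "y0 < Bi \<Longrightarrow> G Bi y0 Bj xj \<le> 0"
    and down: "L < y0 \<Longrightarrow> 0 \<le> G Bi y0 Bj xj"
  shows "\<forall>y\<in>{L..Bi}. Q Bi y Bj xj \<le> Q Bi y0 Bj xj"
proof
  fix y assume y: "y \<in> {L..Bi}"
  consider "y = y0" | "y0 < y" | "y < y0" by linarith
  then show "Q Bi y Bj xj \<le> Q Bi y0 Bj xj"
  proof cases
    case 1 then show ?thesis by simp
  next
    case 2
    obtain l z where z: "y0 < z" "z < y" "DERIV (\<lambda>y. Q Bi y Bj xj) z :> l"
      "Q Bi y Bj xj - Q Bi y0 Bj xj = (y - y0) * l"
    proof (rule MVT[OF 2, THEN exE])
      show "continuous_on {y0..y} (\<lambda>y. Q Bi y Bj xj)" using assms y by (intro Q_cont) auto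
      fix x assume "y0 < x" "x < y"
      then show "(\<lambda>y. Q Bi y Bj xj) differentiable at x"
        using assms y real_differentiable_def Q_deriv[of x xj Bi Bj] by force
    qed blast
    have "l = G Bi z Bj xj" using z assms y Q_deriv[of z xj Bi Bj] DERIV_unique by force
    moreover have "G Bi z Bj xj < G Bi y0 Bj xj"
      using z assms y by (intro G_strict_mono) auto
    moreover have "G Bi y0 Bj xj \<le> 0" using up z y by auto
    ultimately show ?thesis using z 2 by (smt (verit) mult_pos_neg)
  next
    case 3
    obtain l z where z: "y < z" "z < y0" "DERIV (\<lambda>y. Q Bi y Bj xj) z :> l"
      "Q Bi y0 Bj xj - Q Bi y Bj xj = (y0 - y) * l"
    proof (rule MVT[OF 3, THEN exE])
      show "continuous_on {y..y0} (\<lambda>y. Q Bi y Bj xj)" using assms y by (intro Q_cont) auto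
      fix x assume "y < x" "x < y0"
      then show "(\<lambda>y. Q Bi y Bj xj) differentiable at x"
        using assms y real_differentiable_def Q_deriv[of x xj Bi Bj] by force
    qed blast
    have "l = G Bi z Bj xj" using z assms y Q_deriv[of z xj Bi Bj] DERIV_unique by force
    moreover have "G Bi y0 Bj xj < G Bi z Bj xj"
      using z assms y by (intro G_strict_mono) auto
    moreover have "0 \<le> G Bi y0 Bj xj" using down z y by auto
    ultimately show ?thesis using z 3 by (smt (verit) mult_pos_pos)
  qed
qed

lemma SMALL:
  assumes "0 < c" "0 < ub"
  shows "\<exists>t. 0 < t \<and> t < ub \<and> c < t powr (-a)"
proof -
  define t where "t = min (ub/2) (c powr (-1/a) / 2)"
  have cp: "0 < c powr (-1/a)" using assms by simp
  have t0: "0 < t" "t < ub" "t < c powr (-1/a)" using assms cp unfolding t_def by (auto simp: min_def)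
  have "(c powr (-1/a)) powr (-a) < t powr (-a)"
    using t0 a0 by (intro powr_less_mono2_neg) auto
  moreover have "(c powr (-1/a)) powr (-a) = c"
    using a0 assms by (simp add: powr_powr)
  ultimately show ?thesis using t0 by auto
qed

lemma E1:
  assumes "0 < Bi" "0 \<le> Bj"
  shows "\<exists>y\<in>{0..Bi}. Q Bi 0 Bj 0 < Q Bi y Bj 0"
proof -
  define T where "T = Bi + Bj"
  have T0: "0 < T" using assms T_def by auto
  obtain y where y: "0 < y" "y < Bi" "cM * T powr (-a) / cS < y powr (-a)"
    using SMALL[of "cM * T powr (-a) / cS" Bi] assms T0 cM0 cS0 by auto
  have "T powr (-a) \<le> (T - y) powr (-a)" using y assms T_def a0 by (intro powr_mono2') auto
  then have A: "cM*(Bi-y)*T powr (-a) \<le> cM*(Bi-y)*(T - y) powr (-a)"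
    using y cM0 by (intro mult_left_mono) auto
  have B: "cM * T powr (-a) < cS * y powr (-a)" using y cS0 by (simp add: field_simps)
  have "Q Bi 0 Bj 0 = cM*Bi*T powr (-a)" unfolding Q_def T_def by simp
  also have "\<dots> = cM*(Bi-y)*T powr (-a) + y * (cM * T powr (-a))" by (simp add: algebra_simps)
  also have "\<dots> < cM*(Bi-y)*T powr (-a) + y * (cS * y powr (-a))"
    using B y by simp
  also have "\<dots> \<le> Q Bi y Bj 0" using A unfolding Q_def T_def by (simp add: algebra_simps)
  finally show ?thesis using y by auto
qed

lemma E2:
  assumes "0 \<le> L" "L < Bi" "0 \<le> Bj"
  shows "\<exists>y\<in>{L..Bi}. Q Bi Bi Bj Bj < Q Bi y Bj Bj"
proof -
  define T where "T = Bi + Bj"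
  have T0: "0 < T" using assms T_def by auto
  obtain h where h: "0 < h" "h < Bi - L" "cS * T powr (-a) / cM < h powr (-a)"
    using SMALL[of "cS * T powr (-a) / cM" "Bi - L"] assms T0 cM0 cS0 by auto
  have "T powr (-a) \<le> (T - h) powr (-a)" using h assms T_def a0 by (intro powr_mono2') auto
  then have A: "cS*(Bi-h)*T powr (-a) \<le> cS*(Bi-h)*(T - h) powr (-a)"
    using h cS0 assms by (intro mult_left_mono) auto
  have B: "cS * T powr (-a) < cM * h powr (-a)" using h cM0 by (simp add: field_simps)
  have "Q Bi Bi Bj Bj = cS*Bi*T powr (-a)" unfolding Q_def T_def by simp
  also have "\<dots> = cS*(Bi-h)*T powr (-a) + h * (cS * T powr (-a))" by (simp add: algebra_simps)
  also have "\<dots> < cS*(Bi-h)*T powr (-a) + h * (cM * h powr (-a))"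
    using B h by simp
  also have "\<dots> \<le> Q Bi (Bi - h) Bj Bj" using A unfolding Q_def T_def by (simp add: algebra_simps)
  finally show ?thesis using h by (intro bexI[of _ "Bi - h"]) auto
qed

lemma G_sum:
  assumes "0 < xi + xj" "0 < Bi - xi + (Bj - xj)"
  shows "G Bi xi Bj xj + G Bj xj Bi xi
    = (2 - a) * (cS * (xi+xj) powr (-a) - cM * (Bi - xi + (Bj - xj)) powr (-a))"
proof -
  have s: "xj/(xj+xi) = 1 - xi/(xi+xj)" using assms by (simp add: field_simps)
  have u: "(Bj - xj)/(Bj-xj+(Bi-xi)) = 1 - (Bi-xi)/(Bi-xi+(Bj-xj))" using assms by (simp add: field_simps)
  have e1: "xj + xi = xi + xj" "Bj - xj + (Bi - xi) = Bi - xi + (Bj - xj)" by simp_all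
  show ?thesis unfolding G_def s u unfolding e1 Hf_def by (simp add: algebra_simps)
qed

definition NEQ :: "real \<Rightarrow> real \<Rightarrow> real \<Rightarrow> real \<Rightarrow> real \<Rightarrow> real \<Rightarrow> bool" where
  "NEQ B1 B2 L1 L2 x1 x2 \<longleftrightarrow> L1 \<le> x1 \<and> x1 \<le> B1 \<and> L2 \<le> x2 \<and> x2 \<le> B2
     \<and> (\<forall>y\<in>{L1..B1}. Q B1 y B2 x2 \<le> Q B1 x1 B2 x2)
     \<and> (\<forall>y\<in>{L2..B2}. Q B2 y B1 x1 \<le> Q B2 x2 B1 x1)"

lemma NEQ_sym: "NEQ B1 B2 L1 L2 x1 x2 \<longleftrightarrow> NEQ B2 B1 L2 L1 x2 x1"
  unfolding NEQ_def by auto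

lemma NE_S_pos:
  assumes "NEQ B1 B2 L1 L2 x1 x2" "0 < B1" "0 < B2" "0 \<le> L1" "0 \<le> L2"
  shows "0 < x1 + x2"
proof (rule ccontr)
  assume "\<not> ?thesis"
  then have "x1 = 0" "x2 = 0" "L1 = 0" using assms unfolding NEQ_def by auto
  then show False using E1[of B1 B2] assms unfolding NEQ_def by force
qed

lemma NE_M_pos:
  assumes "NEQ B1 B2 L1 L2 x1 x2" "0 < B1" "0 < B2" "0 \<le> L1" "0 \<le> L2" "L1 < x1"
  shows "0 < B1 - x1 + (B2 - x2)"
proof (rule ccontr)
  assume "\<not> ?thesis"
  then have "x1 = B1" "x2 = B2" using assms unfolding NEQ_def by auto
  then show False using E2[of L1 B1 B2] assms unfolding NEQ_def by force
qed

lemma UNIQ_core: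
  assumes x: "NEQ B1 B2 L1 L2 x1 x2" and y: "NEQ B1 B2 L1 L2 y1 y2"
    and pos: "0 < B1" "0 < B2" "0 \<le> L1" "0 \<le> L2"
    and le: "x1 + x2 \<le> y1 + y2" and lt: "x1 < y1"
  shows False
proof -
  have bx: "L1 \<le> x1" "x1 \<le> B1" "L2 \<le> x2" "x2 \<le> B2" using x unfolding NEQ_def by auto
  have by': "L1 \<le> y1" "y1 \<le> B1" "L2 \<le> y2" "y2 \<le> B2" using y unfolding NEQ_def by auto
  have Sx: "0 < x1 + x2" using NE_S_pos[OF x pos] .
  have Sy: "0 < y1 + y2" using NE_S_pos[OF y pos] .
  have Mx: "0 < B1 - x1 + (B2 - x2)" using lt bx by' by linarith
  have My: "0 < B1 - y1 + (B2 - y2)" using NE_M_pos[OF y pos] lt bx by linarith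
  have G1x: "G B1 x1 B2 x2 \<le> 0"
    using NEC_up[of L1 B1 B2 x2 x1] x Sx Mx lt by' unfolding NEQ_def by auto
  have G1y: "0 \<le> G B1 y1 B2 y2"
    using NEC_down[of L1 B1 B2 y2 y1] y Sy My lt bx unfolding NEQ_def by auto
  show False
  proof (cases "y2 \<le> x2")
    case True
    have x10: "0 \<le> x1" "0 \<le> x2" "0 \<le> y2" using bx by' pos by auto
    have "x1 * y2 \<le> y1 * x2" using True lt x10 by (intro mult_mono) auto
    then have ss: "x1/(x1+x2) \<le> y1/(y1+y2)" using Sx Sy by (simp add: divide_simps algebra_simps)
    have "(B1 - y1) * (B2 - x2) \<le> (B1 - x1) * (B2 - y2)" using True lt bx by' by (intro mult_mono) auto
    then have uu: "(B1-y1)/(B1-y1+(B2-y2)) \<le> (B1-x1)/(B1-x1+(B2-x2))"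
      using Mx My by (simp add: divide_simps algebra_simps)
    have strict: "x1 + x2 < y1 + y2 \<or> x1/(x1+x2) < y1/(y1+y2)"
    proof (cases "x1 + x2 < y1 + y2")
      case False
      then have "y2 < x2" using le lt by linarith
      then have "x1 * y2 \<le> x1 * x2" "x1 * x2 < y1 * x2" using x10 lt by (auto intro: mult_left_mono)
      then have "x1 * y2 < y1 * x2" by linarith
      then show ?thesis using Sx Sy by (simp add: divide_simps algebra_simps)
    qed simp
    have "G B1 y1 B2 y2 < G B1 x1 B2 x2"
      unfolding G_def
      apply (rule Hmono(2))
      using Sx le My Mx ss uu strict bx by' x10 by (auto simp: divide_simps)
    then show False using G1x G1y by linarith
  next
    case False
    have Sl: "x1 + x2 < y1 + y2" using False lt by linarith
    have G2x: "G B2 x2 B1 x1 \<le> 0"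
      using NEC_up[of L2 B2 B1 x1 x2] x Sx Mx False by' unfolding NEQ_def by (auto simp: add.commute)
    have My2: "0 < B2 - y2 + (B1 - y1)" using My by linarith
    have G2y: "0 \<le> G B2 y2 B1 y1"
      using NEC_down[of L2 B2 B1 y1 y2] y Sy My2 False bx unfolding NEQ_def by (auto simp: add.commute)
    have sx: "G B1 x1 B2 x2 + G B2 x2 B1 x1 = (2 - a) * (cS * (x1+x2) powr (-a) - cM * (B1 - x1 + (B2 - x2)) powr (-a))"
      using G_sum Sx Mx by blast
    have sy: "G B1 y1 B2 y2 + G B2 y2 B1 y1 = (2 - a) * (cS * (y1+y2) powr (-a) - cM * (B1 - y1 + (B2 - y2)) powr (-a))"
      using G_sum Sy My by blast
    have "(y1+y2) powr (-a) < (x1+x2) powr (-a)" using Sl Sx a0 by (intro powr_less_mono2_neg) auto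
    moreover have "(B1 - x1 + (B2 - x2)) powr (-a) < (B1 - y1 + (B2 - y2)) powr (-a)"
      using Sl My a0 by (intro powr_less_mono2_neg) auto
    ultimately have "cS * (y1+y2) powr (-a) - cM * (B1 - y1 + (B2 - y2)) powr (-a)
       < cS * (x1+x2) powr (-a) - cM * (B1 - x1 + (B2 - x2)) powr (-a)"
      using cS0 cM0 by (smt (verit) mult_strict_left_mono)
    then have "(2-a) * (cS * (y1+y2) powr (-a) - cM * (B1 - y1 + (B2 - y2)) powr (-a))
       < (2-a) * (cS * (x1+x2) powr (-a) - cM * (B1 - x1 + (B2 - x2)) powr (-a))"
      using a1 by (intro mult_strict_left_mono) auto
    then show False using sx sy G1x G1y G2x G2y by linarith
  qed
qed

lemma UNIQ:
  assumes x: "NEQ B1 B2 L1 L2 x1 x2" and y: "NEQ B1 B2 L1 L2 y1 y2"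
    and pos: "0 < B1" "0 < B2" "0 \<le> L1" "0 \<le> L2"
  shows "x1 = y1 \<and> x2 = y2"
proof -
  have main: "x1 = y1 \<and> x2 = y2" if x: "NEQ B1 B2 L1 L2 x1 x2" and y: "NEQ B1 B2 L1 L2 y1 y2"
    and le: "x1 + x2 \<le> y1 + y2" for x1 x2 y1 y2
  proof -
    have "\<not> x1 < y1" using UNIQ_core[OF x y pos le] by blast
    moreover have "\<not> x2 < y2"
      using UNIQ_core[of B2 B1 L2 L1 x2 x1 y2 y1] x y pos le NEQ_sym by force
    ultimately show ?thesis using le by linarith
  qed
  show ?thesis
  proof (cases "x1 + x2 \<le> y1 + y2")
    case True then show ?thesis using main x y by blast
  next
    case False then show ?thesis using main[OF y x] by force
  qed
qed

lemma LB_core: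
  assumes x: "NEQ B1 B2 L1 L2 x1 x2"
    and pos: "0 < B1" "0 < B2" "0 \<le> L1" "0 \<le> L2"
    and pq: "cM * (B1 - x1 + (B2 - x2)) powr (-a) < cS * (x1 + x2) powr (-a)"
    and lt: "x1 + x2 < B1 + B2"
    and G1: "0 < G B1 x1 B2 x2"
  shows False
proof -
  have bx: "L1 \<le> x1" "x1 \<le> B1" "L2 \<le> x2" "x2 \<le> B2" using x unfolding NEQ_def by auto
  have Sx: "0 < x1 + x2" using NE_S_pos[OF x pos] .
  have Mx: "0 < B1 - x1 + (B2 - x2)" using lt by linarith
  have "x1 = B1"
  proof (rule ccontr)
    assume "x1 \<noteq> B1"
    then have "G B1 x1 B2 x2 \<le> 0"
      using NEC_up[of L1 B1 B2 x2 x1] x Sx Mx bx unfolding NEQ_def by auto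
    then show False using G1 by linarith
  qed
  then have x2B: "x2 < B2" using lt by linarith
  have G2x: "G B2 x2 B1 x1 \<le> 0"
    using NEC_up[of L2 B2 B1 x1 x2] x Sx Mx x2B unfolding NEQ_def by (auto simp: add.commute)
  have s1: "x2/(x2+x1) \<le> 1" "0 \<le> x2/(x2+x1)" using Sx bx pos by (auto simp: divide_simps)
  have u1: "(B2 - x2)/(B2 - x2 + (B1 - x1)) = 1" using \<open>x1 = B1\<close> x2B by simp
  have "a * (x2/(x2+x1)) \<le> a * 1" using s1 a0 by (intro mult_left_mono) auto
  then have t: "1 - a \<le> 1 - a*(x2/(x2+x1))" by simp
  have p0: "0 < cS * (x2+x1) powr (-a)" using Sx cS0 by auto
  have "cM * (B1 - x1 + (B2 - x2)) powr (-a) * (1 - a) < cS * (x2+x1) powr (-a) * (1 - a)"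
    using pq a1 by (simp add: add.commute)
  also have "\<dots> \<le> cS * (x2+x1) powr (-a) * (1 - a*(x2/(x2+x1)))"
    using t p0 by (intro mult_left_mono) auto
  finally have "0 < G B2 x2 B1 x1"
    unfolding G_def Hf_def u1 by (simp add: algebra_simps)
  then show False using G2x by linarith
qed

lemma LB:
  assumes x: "NEQ B1 B2 L1 L2 x1 x2"
    and pos: "0 < B1" "0 < B2" "0 \<le> L1" "0 \<le> L2"
    and pq: "cM * (B1 - x1 + (B2 - x2)) powr (-a) < cS * (x1 + x2) powr (-a)"
    and lt: "x1 + x2 < B1 + B2"
  shows False
proof -
  have Sx: "0 < x1 + x2" using NE_S_pos[OF x pos] .
  have Mx: "0 < B1 - x1 + (B2 - x2)" using lt by linarith
  have "0 < (2 - a) * (cS * (x1+x2) powr (-a) - cM * (B1 - x1 + (B2 - x2)) powr (-a))"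
    using pq a1 by (intro mult_pos_pos) auto
  then have "0 < G B1 x1 B2 x2 \<or> 0 < G B2 x2 B1 x1" using G_sum[OF Sx Mx] by linarith
  then show False
  proof
    assume "0 < G B1 x1 B2 x2" then show False using LB_core[OF x pos pq lt] by blast
  next
    assume "0 < G B2 x2 B1 x1"
    then show False using LB_core[of B2 B1 L2 L1 x2 x1] x pos pq lt NEQ_sym
      by (simp add: add.commute algebra_simps)
  qed
qed

definition zf :: "real \<Rightarrow> real \<Rightarrow> real \<Rightarrow> real" where
  "zf T B S = (cS * S powr (-a) - cM * (T-S) powr (-a) + cM * (T-S) powr (-a) * a * B / (T-S))
      / (a * (cS * S powr (-a) / S + cM * (T-S) powr (-a) / (T-S)))"

definition rf :: "real \<Rightarrow> real \<Rightarrow> real \<Rightarrow> real \<Rightarrow> real" where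
  "rf T L B S = max L (min B (zf T B S))"

lemma den_pos:
  assumes "0 < S" "S < T"
  shows "0 < a * (cS * S powr (-a) / S + cM * (T-S) powr (-a) / (T-S))"
  using assms a0 cS0 cM0 by (intro mult_pos_pos add_pos_pos divide_pos_pos) auto

lemma G_z:
  assumes "0 < xi + xj" "xi + xj < Bi + Bj"
  shows "G Bi xi Bj xj = a * (cS * (xi+xj) powr (-a) / (xi+xj) + cM * (Bi+Bj-(xi+xj)) powr (-a) / (Bi+Bj-(xi+xj)))
     * (zf (Bi+Bj) Bi (xi+xj) - xi)"
proof -
  define D where "D = a * (cS * (xi+xj) powr (-a) / (xi+xj) + cM * (Bi+Bj-(xi+xj)) powr (-a) / (Bi+Bj-(xi+xj)))"
  have D0: "0 < D" unfolding D_def using den_pos assms by auto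
  have M: "Bi - xi + (Bj - xj) = Bi+Bj-(xi+xj)" by simp
  have "D * zf (Bi+Bj) Bi (xi+xj) = cS * (xi+xj) powr (-a) - cM * (Bi+Bj-(xi+xj)) powr (-a) + cM * (Bi+Bj-(xi+xj)) powr (-a) * a * Bi / (Bi+Bj-(xi+xj))"
    unfolding zf_def D_def[symmetric] using D0 by simp
  then show ?thesis unfolding D_def[symmetric] G_def M Hf_def using assms
    by (simp add: algebra_simps D_def add_divide_distrib diff_divide_distrib)
qed

lemma cont_zf:
  assumes "0 < lo" "hi < T"
  shows "continuous_on {lo..hi} (zf T B)"
proof -
  have "\<forall>S\<in>{lo..hi}. 0 < a * (cS * S powr (-a) / S + cM * (T-S) powr (-a) / (T-S))"
    using den_pos assms by auto
  then show ?thesis unfolding zf_def using assms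
    by (intro continuous_intros) auto
qed

lemma zf_eq:
  assumes "0 < S" "S < T"
  shows "a * (cS * S powr (-a) / S + cM * (T-S) powr (-a) / (T-S)) * zf T B S
      = cS * S powr (-a) - cM * (T-S) powr (-a) + cM * (T-S) powr (-a) * a * B / (T-S)"
proof -
  have g: "D * (N / D) = N" if "D \<noteq> 0" for D N :: real using that by simp
  show ?thesis unfolding zf_def by (rule g) (use den_pos[OF assms] in linarith)
qed

lemma alg_sum:
  fixes p q S M B1 B2 :: real
  assumes "S \<noteq> 0" "M \<noteq> 0" "B1 + B2 = S + M"
  shows "(p - q + q * a * B1 / M) + (p - q + q * a * B2 / M) - a * (p / S + q / M) * S = (2 - a) * (p - q)"
proof -
  have B2: "B2 = S + M - B1" using assms(3) by simp
  show ?thesis unfolding B2 using assms(1,2) by (simp add: field_simps)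
qed

lemma alg_hi:
  fixes p q S M B :: real
  assumes "S \<noteq> 0" "M \<noteq> 0"
  shows "(p - q + q * a * B / M) - a * (p / S + q / M) * (B - M) = p * (1 - a * (B - M) / S) - q * (1 - a)"
  using assms by (simp add: field_simps)

lemma zsum:
  assumes "0 < S" "S < B1 + B2"
  shows "a * (cS * S powr (-a) / S + cM * (B1+B2-S) powr (-a) / (B1+B2-S)) * (zf (B1+B2) B1 S + zf (B1+B2) B2 S - S)
     = (2 - a) * (cS * S powr (-a) - cM * (B1+B2-S) powr (-a))"
proof -
  define p where "p = cS * S powr (-a)"
  define q where "q = cM * (B1+B2-S) powr (-a)"
  define D where "D = a * (p / S + q / (B1+B2-S))"
  have e1: "D * zf (B1+B2) B1 S = p - q + q * a * B1 / (B1+B2-S)"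
    using zf_eq[OF assms, of B1] unfolding p_def q_def D_def .
  have e2: "D * zf (B1+B2) B2 S = p - q + q * a * B2 / (B1+B2-S)"
    using zf_eq[OF assms, of B2] unfolding p_def q_def D_def .
  have "D * (zf (B1+B2) B1 S + zf (B1+B2) B2 S - S) = D * zf (B1+B2) B1 S + D * zf (B1+B2) B2 S - D * S"
    by (simp add: algebra_simps)
  also have "\<dots> = (p - q + q * a * B1 / (B1+B2-S)) + (p - q + q * a * B2 / (B1+B2-S)) - D * S"
    by (simp only: e1 e2)
  also have "\<dots> = (2 - a) * (p - q)" unfolding D_def by (rule alg_sum) (use assms in auto)
  finally show ?thesis unfolding p_def q_def D_def .
qed

lemma zhi:
  assumes "0 < S" "S < T"
  shows "a * (cS * S powr (-a) / S + cM * (T-S) powr (-a) / (T-S)) * (zf T B S - (B - (T - S)))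
     = cS * S powr (-a) * (1 - a * (B - (T-S)) / S) - cM * (T-S) powr (-a) * (1 - a)"
proof -
  define p where "p = cS * S powr (-a)"
  define q where "q = cM * (T-S) powr (-a)"
  define D where "D = a * (p / S + q / (T-S))"
  have e1: "D * zf T B S = p - q + q * a * B / (T-S)"
    using zf_eq[OF assms, of B] unfolding p_def q_def D_def .
  have "D * (zf T B S - (B - (T - S))) = D * zf T B S - D * (B - (T - S))"
    by (simp add: algebra_simps)
  also have "\<dots> = (p - q + q * a * B / (T-S)) - D * (B - (T - S))"
    by (simp only: e1)
  also have "\<dots> = p * (1 - a * (B - (T-S)) / S) - q * (1 - a)" unfolding D_def by (rule alg_hi) (use assms in auto)
  finally show ?thesis unfolding p_def q_def D_def .
qed

lemma clamp:
  fixes L B z :: real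
  assumes "L \<le> B"
  shows "L \<le> max L (min B z)" "max L (min B z) \<le> B"
    "max L (min B z) < B \<Longrightarrow> z \<le> max L (min B z)"
    "L < max L (min B z) \<Longrightarrow> max L (min B z) \<le> z"
  using assms by (auto simp: max_def min_def split: if_splits)

lemma EXIST:
  assumes pos: "0 < B1" "0 < B2" "0 \<le> L1" "L1 \<le> B1" "0 \<le> L2" "L2 \<le> B2"
    and Llt: "L1 + L2 < B1 + B2"
  shows "\<exists>x1 x2. NEQ B1 B2 L1 L2 x1 x2"
proof -
  define T where "T = B1 + B2"
  define f where "f S = rf T L1 B1 S + rf T L2 B2 S - S" for S
  have T0: "0 < T" using pos T_def by auto
  have minT: "min B1 B2 \<le> T/2" unfolding T_def by auto
  obtain t where t: "0 < t" "t < min B1 B2" "cM * (T/2) powr (-a) / cS < t powr (-a)"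
    using SMALL[of "cM * (T/2) powr (-a) / cS" "min B1 B2"] pos T0 cM0 cS0 by auto
  have tT: "T/2 < T - t" "t < T" using t minT by auto
  have "(T - t) powr (-a) < (T/2) powr (-a)" using tT T0 a0 by (intro powr_less_mono2_neg) auto
  then have "cM * (T - t) powr (-a) < cM * (T/2) powr (-a)" using cM0 by simp
  also have "\<dots> < cS * t powr (-a)" using t cS0 by (simp add: field_simps)
  finally have pq_lo: "cM * (T - t) powr (-a) < cS * t powr (-a)" .
  have flo: "0 < f t"
  proof -
    have D: "0 < a * (cS * t powr (-a) / t + cM * (T-t) powr (-a) / (T-t))" using den_pos t tT by auto
    have "0 < (2 - a) * (cS * t powr (-a) - cM * (T-t) powr (-a))" using pq_lo a1 by (intro mult_pos_pos) auto
    then have zs: "t < zf T B1 t + zf T B2 t" using zsum[of t B1 B2] t tT D unfolding T_def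
      by (smt (verit) mult_pos_pos zero_less_mult_pos)
    have zp: "0 < zf T B t" if "0 \<le> B" for B
    proof -
      have "0 < cS * t powr (-a) - cM * (T-t) powr (-a) + cM * (T-t) powr (-a) * a * B / (T-t)"
        using pq_lo that a0 cM0 tT by (smt (verit) divide_nonneg_pos mult_nonneg_nonneg powr_ge_zero)
      then show ?thesis using zf_eq[of t T B] t tT D by (smt (verit) zero_less_mult_pos)
    qed
    have r1: "rf T L1 B1 t \<ge> min B1 (zf T B1 t)" "rf T L1 B1 t \<ge> 0" using pos unfolding rf_def by auto
    have r2: "rf T L2 B2 t \<ge> min B2 (zf T B2 t)" "rf T L2 B2 t \<ge> 0" using pos unfolding rf_def by auto
    show ?thesis unfolding f_def using r1 r2 zs t by (auto simp: min_def split: if_splits)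
  qed
  obtain m where m: "0 < m" "m < min (min B1 B2) (T - (L1+L2))"
    "cS * (T/2) powr (-a) / (cM * (1-a)) < m powr (-a)"
    using SMALL[of "cS * (T/2) powr (-a) / (cM * (1-a))" "min (min B1 B2) (T - (L1+L2))"]
      pos T0 cM0 cS0 a1 Llt T_def by auto
  define Sh where "Sh = T - m"
  have Sh: "T/2 < Sh" "Sh < T" "0 < Sh" "L1 + L2 < Sh" "T - Sh = m" using m minT T0 unfolding Sh_def by auto
  have "Sh powr (-a) < (T/2) powr (-a)" using Sh T0 a0 by (intro powr_less_mono2_neg) auto
  then have "cS * Sh powr (-a) < cS * (T/2) powr (-a)" using cS0 by simp
  also have "\<dots> < cM * (1-a) * m powr (-a)" using m cM0 a1 by (simp add: field_simps)
  finally have pq_hi: "cS * Sh powr (-a) < cM * (1-a) * m powr (-a)" .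
  have zlt: "zf T B Sh < B - m" if "m < B" for B
  proof -
    have D: "0 < a * (cS * Sh powr (-a) / Sh + cM * (T-Sh) powr (-a) / (T-Sh))" using den_pos Sh by auto
    have "0 \<le> a * (B - m) / Sh" using that a0 Sh by auto
    then have "cS * Sh powr (-a) * (1 - a * (B - m) / Sh) \<le> cS * Sh powr (-a)"
      using cS0 by (simp add: mult_left_le)
    then have "cS * Sh powr (-a) * (1 - a * (B - (T-Sh)) / Sh) - cM * (T-Sh) powr (-a) * (1 - a) < 0"
      using pq_hi Sh by (simp add: algebra_simps)
    then have X: "a * (cS * Sh powr (-a) / Sh + cM * (T-Sh) powr (-a) / (T-Sh)) * (zf T B Sh - (B - (T - Sh))) < 0"
      using zhi[of Sh T B] Sh by simp
    have gen: "\<And>d y::real. 0 < d \<Longrightarrow> d * y < 0 \<Longrightarrow> y < 0" by (simp add: mult_less_0_iff)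
    have "zf T B Sh - (B - (T - Sh)) < 0" by (rule gen[OF D X])
    then show ?thesis using Sh by simp
  qed
  have fhi: "f Sh \<le> 0"
  proof -
    have "rf T L1 B1 Sh \<le> max L1 (B1 - m)" using zlt[of B1] m unfolding rf_def by auto
    moreover have "rf T L2 B2 Sh \<le> max L2 (B2 - m)" using zlt[of B2] m unfolding rf_def by auto
    ultimately show ?thesis unfolding f_def using Sh pos T_def by (auto simp: max_def split: if_splits)
  qed
  define lo where "lo = min t Sh"
  define hi where "hi = max t Sh"
  have lohi: "0 < lo" "hi < T" "lo \<le> hi" using t tT Sh unfolding lo_def hi_def by auto
  have cont: "continuous_on {lo..hi} f"
    unfolding f_def rf_def using cont_zf[OF lohi(1,2)]
    by (intro continuous_intros) auto
  obtain S where S: "lo \<le> S" "S \<le> hi" "f S = 0"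
  proof (cases "t \<le> Sh")
    case True
    then have "lo = t" "hi = Sh" unfolding lo_def hi_def by auto
    then show ?thesis using IVT2'[of f hi 0 lo] flo fhi cont lohi that by auto
  next
    case False
    then have "lo = Sh" "hi = t" unfolding lo_def hi_def by auto
    then show ?thesis using IVT'[of f lo 0 hi] flo fhi cont lohi that by auto
  qed
  define x1 where "x1 = rf T L1 B1 S"
  define x2 where "x2 = rf T L2 B2 S"
  have S0: "0 < S" "S < T" using S lohi by auto
  have sum: "x1 + x2 = S" using S unfolding f_def x1_def x2_def by simp
  have c1: "L1 \<le> x1" "x1 \<le> B1" "x1 < B1 \<Longrightarrow> zf T B1 S \<le> x1" "L1 < x1 \<Longrightarrow> x1 \<le> zf T B1 S"
    unfolding x1_def rf_def using clamp[of L1 B1 "zf T B1 S"] pos by auto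
  have c2: "L2 \<le> x2" "x2 \<le> B2" "x2 < B2 \<Longrightarrow> zf T B2 S \<le> x2" "L2 < x2 \<Longrightarrow> x2 \<le> zf T B2 S"
    unfolding x2_def rf_def using clamp[of L2 B2 "zf T B2 S"] pos by auto
  have D: "0 < a * (cS * S powr (-a) / S + cM * (T-S) powr (-a) / (T-S))" using den_pos S0 by auto
  have G1: "G B1 x1 B2 x2 = a * (cS * S powr (-a) / S + cM * (T-S) powr (-a) / (T-S)) * (zf T B1 S - x1)"
    using G_z[of x1 x2 B1 B2] sum S0 unfolding T_def by simp
  have G2: "G B2 x2 B1 x1 = a * (cS * S powr (-a) / S + cM * (T-S) powr (-a) / (T-S)) * (zf T B2 S - x2)"
    using G_z[of x2 x1 B2 B1] sum S0 unfolding T_def by (simp add: add.commute)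
  have br1: "\<forall>y\<in>{L1..B1}. Q B1 y B2 x2 \<le> Q B1 x1 B2 x2"
  proof (rule SUFF)
    show "x1 < B1 \<Longrightarrow> G B1 x1 B2 x2 \<le> 0" using G1 D c1 by (simp add: mult_nonpos_nonneg mult_le_0_iff)
    show "L1 < x1 \<Longrightarrow> 0 \<le> G B1 x1 B2 x2" using G1 D c1 by simp
  qed (use pos c1 c2 sum S0 T_def in auto)
  have br2: "\<forall>y\<in>{L2..B2}. Q B2 y B1 x1 \<le> Q B2 x2 B1 x1"
  proof (rule SUFF)
    show "x2 < B2 \<Longrightarrow> G B2 x2 B1 x1 \<le> 0" using G2 D c2 by (simp add: mult_nonpos_nonneg mult_le_0_iff)
    show "L2 < x2 \<Longrightarrow> 0 \<le> G B2 x2 B1 x1" using G2 D c2 by simp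
  qed (use pos c1 c2 sum S0 T_def in auto)
  show ?thesis unfolding NEQ_def using br1 br2 c1 c2 by blast
qed

end

lemma rev_eq:
  fixes alpha Nm Nf R0 lamS :: real
  assumes "0 < Nm" "0 < Nf" "0 < R0" "0 < lamS"
    and "0 \<le> Bi - y + (Bj - xj)" "0 \<le> y + xj"
  shows "revenue alpha R0 lamS (rate_M Nm R0 Bi Bj y xj) (rate_S Nf R0 lamS y xj) (Bi - y) y
    = R0 * ((R0/Nm) powr (-alpha) * (Bi-y)*(Bi-y+(Bj-xj)) powr (-alpha)
        + (lamS * (lamS*R0/Nf) powr (-alpha))*y*(y+xj) powr (-alpha))"
proof -
  have m: "rate_M Nm R0 Bi Bj y xj = (Bi-y+(Bj-xj)) * (R0/Nm)" unfolding rate_M_def by simp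
  have s: "rate_S Nf R0 lamS y xj = (y+xj) * (lamS*R0/Nf)" unfolding rate_S_def by simp
  have pm: "((Bi-y+(Bj-xj)) * (R0/Nm)) powr (-alpha) = (Bi-y+(Bj-xj)) powr (-alpha) * (R0/Nm) powr (-alpha)"
    by (rule powr_mult)
  have ps: "((y+xj) * (lamS*R0/Nf)) powr (-alpha) = (y+xj) powr (-alpha) * (lamS*R0/Nf) powr (-alpha)"
    by (rule powr_mult)
  show ?thesis unfolding revenue_def m s pm ps by (simp add: algebra_simps)
qed

theorem theorem2:
  fixes alpha Nm Nf R0 lamS B1 B2 B10 B20 :: real
  assumes "0 < alpha" "alpha < 1" "0 < Nm" "0 < Nf" "0 < R0" "1 < lamS"
    and "0 < B1" "0 < B2"
    and "0 \<le> B10" "B10 \<le> B1" "0 \<le> B20" "B20 \<le> B2"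
  shows "(\<exists>!p. is_NE alpha Nm Nf R0 lamS B1 B2 B10 B20 p)
    \<and> (\<forall>p. is_NE alpha Nm Nf R0 lamS B1 B2 B10 B20 p \<longrightarrow>
          fst p + snd p \<ge> B_free alpha Nm Nf lamS B1 + B_free alpha Nm Nf lamS B2)
    \<and> B_free alpha Nm Nf lamS B1 + B_free alpha Nm Nf lamS B2
        = eps_param alpha lamS * Nf * (B1 + B2) / (eps_param alpha lamS * Nf + Nm)"
proof -
  define cM where "cM = (R0/Nm) powr (-alpha)"
  define cS where "cS = lamS * (lamS*R0/Nf) powr (-alpha)"
  have cM0: "0 < cM" unfolding cM_def using assms by simp
  have cS0: "0 < cS" unfolding cS_def using assms by simp
  interpret g: game alpha cM cS using assms cM0 cS0 by (simp add: game_def)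
  have Qeq1: "payoff1 alpha Nm Nf R0 lamS B1 B2 y x2 = R0 * g.Q B1 y B2 x2"
    if "0 \<le> y" "y \<le> B1" "0 \<le> x2" "x2 \<le> B2" for y x2
    unfolding payoff1_def g.Q_def unfolding cM_def cS_def using that assms
    by (subst rev_eq) (auto simp: algebra_simps)
  have Qeq2: "payoff2 alpha Nm Nf R0 lamS B1 B2 x1 y = R0 * g.Q B2 y B1 x1"
    if "0 \<le> y" "y \<le> B2" "0 \<le> x1" "x1 \<le> B1" for y x1
  proof -
    have "rate_M Nm R0 B1 B2 x1 y = rate_M Nm R0 B2 B1 y x1" unfolding rate_M_def by (simp add: algebra_simps)
    moreover have "rate_S Nf R0 lamS x1 y = rate_S Nf R0 lamS y x1" unfolding rate_S_def by (simp add: algebra_simps)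
    ultimately have "payoff2 alpha Nm Nf R0 lamS B1 B2 x1 y = revenue alpha R0 lamS (rate_M Nm R0 B2 B1 y x1) (rate_S Nf R0 lamS y x1) (B2 - y) y"
      unfolding payoff2_def by simp
    also have "\<dots> = R0 * ((R0/Nm) powr (-alpha) * (B2-y)*(B2-y+(B1-x1)) powr (-alpha)
        + (lamS * (lamS*R0/Nf) powr (-alpha))*y*(y+x1) powr (-alpha))"
      using that assms by (intro rev_eq) auto
    finally show ?thesis unfolding g.Q_def unfolding cM_def cS_def .
  qed
  have NEiff: "is_NE alpha Nm Nf R0 lamS B1 B2 B10 B20 p \<longleftrightarrow> g.NEQ B1 B2 B10 B20 (fst p) (snd p)" for p
  proof (cases p)
    case (Pair x1 x2)
    show ?thesis
    proof
      assume H: "is_NE alpha Nm Nf R0 lamS B1 B2 B10 B20 p"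
      then have b: "B10 \<le> x1" "x1 \<le> B1" "B20 \<le> x2" "x2 \<le> B2" unfolding is_NE_def Pair by auto
      have "\<forall>y\<in>{B10..B1}. g.Q B1 y B2 x2 \<le> g.Q B1 x1 B2 x2"
      proof
        fix y assume y: "y \<in> {B10..B1}"
        then have "payoff1 alpha Nm Nf R0 lamS B1 B2 y x2 \<le> payoff1 alpha Nm Nf R0 lamS B1 B2 x1 x2"
          using H unfolding is_NE_def Pair by auto
        then show "g.Q B1 y B2 x2 \<le> g.Q B1 x1 B2 x2" using Qeq1 y b assms by auto
      qed
      moreover have "\<forall>y\<in>{B20..B2}. g.Q B2 y B1 x1 \<le> g.Q B2 x2 B1 x1"
      proof
        fix y assume y: "y \<in> {B20..B2}"
        then have "payoff2 alpha Nm Nf R0 lamS B1 B2 x1 y \<le> payoff2 alpha Nm Nf R0 lamS B1 B2 x1 x2"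
          using H unfolding is_NE_def Pair by auto
        then show "g.Q B2 y B1 x1 \<le> g.Q B2 x2 B1 x1" using Qeq2 y b assms by auto
      qed
      ultimately show "g.NEQ B1 B2 B10 B20 (fst p) (snd p)" unfolding g.NEQ_def Pair using b by auto
    next
      assume H: "g.NEQ B1 B2 B10 B20 (fst p) (snd p)"
      then have b: "B10 \<le> x1" "x1 \<le> B1" "B20 \<le> x2" "x2 \<le> B2" unfolding g.NEQ_def Pair by auto
      have "\<forall>y\<in>{B10..B1}. payoff1 alpha Nm Nf R0 lamS B1 B2 y x2 \<le> payoff1 alpha Nm Nf R0 lamS B1 B2 x1 x2"
      proof
        fix y assume y: "y \<in> {B10..B1}"
        then have "g.Q B1 y B2 x2 \<le> g.Q B1 x1 B2 x2" using H unfolding g.NEQ_def Pair by auto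
        then show "payoff1 alpha Nm Nf R0 lamS B1 B2 y x2 \<le> payoff1 alpha Nm Nf R0 lamS B1 B2 x1 x2"
          using Qeq1 y b assms by auto
      qed
      moreover have "\<forall>y\<in>{B20..B2}. payoff2 alpha Nm Nf R0 lamS B1 B2 x1 y \<le> payoff2 alpha Nm Nf R0 lamS B1 B2 x1 x2"
      proof
        fix y assume y: "y \<in> {B20..B2}"
        then have "g.Q B2 y B1 x1 \<le> g.Q B2 x2 B1 x1" using H unfolding g.NEQ_def Pair by auto
        then show "payoff2 alpha Nm Nf R0 lamS B1 B2 x1 y \<le> payoff2 alpha Nm Nf R0 lamS B1 B2 x1 x2"
          using Qeq2 y b assms by auto
      qed
      ultimately show "is_NE alpha Nm Nf R0 lamS B1 B2 B10 B20 p" unfolding is_NE_def Pair using b by auto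
    qed
  qed
  have pos: "0 < B1" "0 < B2" "0 \<le> B10" "0 \<le> B20" using assms by auto
  have ex: "\<exists>x1 x2. g.NEQ B1 B2 B10 B20 x1 x2"
  proof (cases "B10 + B20 < B1 + B2")
    case True then show ?thesis using g.EXIST assms by blast
  next
    case False
    then have "B10 = B1" "B20 = B2" using assms by auto
    then have "g.NEQ B1 B2 B10 B20 B1 B2" unfolding g.NEQ_def by auto
    then show ?thesis by blast
  qed
  have part1: "\<exists>!p. is_NE alpha Nm Nf R0 lamS B1 B2 B10 B20 p"
  proof -
    obtain x1 x2 where x: "g.NEQ B1 B2 B10 B20 x1 x2" using ex by blast
    show ?thesis
    proof (rule ex1I[of _ "(x1, x2)"])
      show "is_NE alpha Nm Nf R0 lamS B1 B2 B10 B20 (x1, x2)" using NEiff x by simp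
      fix p assume "is_NE alpha Nm Nf R0 lamS B1 B2 B10 B20 p"
      then have "g.NEQ B1 B2 B10 B20 (fst p) (snd p)" using NEiff by blast
      then have "fst p = x1 \<and> snd p = x2" using g.UNIQ[OF _ x pos] by blast
      then show "p = (x1, x2)" by (simp add: prod_eq_iff)
    qed
  qed
  define eps where "eps = eps_param alpha lamS"
  have eps0: "0 < eps" unfolding eps_def eps_param_def using assms by simp
  define E where "E = eps * Nf + Nm"
  have E0: "0 < E" unfolding E_def using eps0 assms by (simp add: add_pos_pos)
  define T where "T = B1 + B2"
  have T0: "0 < T" unfolding T_def using assms by simp
  define Sf where "Sf = eps * Nf * T / E"
  define Mf where "Mf = Nm * T / E"
  have SfMf: "T - Sf = Mf" unfolding Sf_def Mf_def E_def using E0 E_def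
    by (simp add: field_simps)
  have Sf0: "0 < Sf" "Sf < T" unfolding Sf_def using eps0 assms T0 E0 E_def
    by (auto simp: field_simps)
  have Mf0: "0 < Mf" unfolding Mf_def using assms T0 E0 by simp
  have balance: "cS * Sf powr (-alpha) = cM * Mf powr (-alpha)"
  proof -
    have e1: "cS * Sf powr (-alpha) = lamS * ((lamS*R0/Nf) * Sf) powr (-alpha)"
      unfolding cS_def using powr_mult[of "lamS*R0/Nf" Sf "-alpha"] by simp
    have e2: "(lamS*R0/Nf) * Sf = (lamS * eps) * (R0 * T / E)"
      unfolding Sf_def using assms by (simp add: field_simps)
    have e3: "cM * Mf powr (-alpha) = (R0 * T / E) powr (-alpha)"
    proof -
      have "cM * Mf powr (-alpha) = ((R0/Nm) * Mf) powr (-alpha)"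
        unfolding cM_def using powr_mult[of "R0/Nm" Mf "-alpha"] by simp
      also have "(R0/Nm) * Mf = R0 * T / E" unfolding Mf_def using assms by (simp add: field_simps)
      finally show ?thesis .
    qed
    have e4: "(lamS * eps) powr (-alpha) = lamS powr (-alpha) * lamS powr (alpha - 1)"
    proof -
      have "eps powr (-alpha) = lamS powr ((1/alpha - 1) * (-alpha))"
        unfolding eps_def eps_param_def by (simp add: powr_powr)
      also have "(1/alpha - 1) * (-alpha) = alpha - 1" using assms by (simp add: field_simps)
      finally show ?thesis using assms eps0 by (simp add: powr_mult)
    qed
    have e5: "lamS * (lamS powr (-alpha) * lamS powr (alpha - 1)) = 1"
    proof -
      have "lamS powr (-alpha) * lamS powr (alpha - 1) = lamS powr (-alpha + (alpha - 1))"
        by (rule powr_add[symmetric])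
      also have "-alpha + (alpha - 1) = -1" by simp
      finally have "lamS powr (-alpha) * lamS powr (alpha - 1) = lamS powr (-1)" .
      then show ?thesis using assms by (simp add: powr_minus)
    qed
    have "cS * Sf powr (-alpha) = lamS * ((lamS * eps) * (R0 * T / E)) powr (-alpha)" using e1 unfolding e2 .
    also have "\<dots> = lamS * ((lamS * eps) powr (-alpha) * (R0 * T / E) powr (-alpha))"
      using powr_mult[of "lamS*eps" "R0*T/E" "-alpha"] by simp
    also have "\<dots> = (R0 * T / E) powr (-alpha)" using e4 e5 by (simp add: algebra_simps)
    finally show ?thesis using e3 by simp
  qed
  have part2: "\<forall>p. is_NE alpha Nm Nf R0 lamS B1 B2 B10 B20 p \<longrightarrow>
          fst p + snd p \<ge> B_free alpha Nm Nf lamS B1 + B_free alpha Nm Nf lamS B2"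
  proof (intro allI impI)
    fix p assume "is_NE alpha Nm Nf R0 lamS B1 B2 B10 B20 p"
    then have x: "g.NEQ B1 B2 B10 B20 (fst p) (snd p)" using NEiff by blast
    have bf: "B_free alpha Nm Nf lamS B1 + B_free alpha Nm Nf lamS B2 = Sf"
      unfolding B_free_def Sf_def eps_def[symmetric] E_def T_def by (simp add: add_divide_distrib[symmetric] algebra_simps)
    have S0: "0 < fst p + snd p" using g.NE_S_pos[OF x pos] .
    show "fst p + snd p \<ge> B_free alpha Nm Nf lamS B1 + B_free alpha Nm Nf lamS B2"
    proof (rule ccontr)
      assume "\<not> ?thesis"
      then have lt: "fst p + snd p < Sf" using bf by simp
      have "(fst p + snd p) powr (-alpha) > Sf powr (-alpha)"
        using lt S0 assms by (intro powr_less_mono2_neg) auto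
      moreover have "(B1 - fst p + (B2 - snd p)) powr (-alpha) < Mf powr (-alpha)"
        using lt SfMf Mf0 assms T_def by (intro powr_less_mono2_neg) auto
      ultimately have "cM * (B1 - fst p + (B2 - snd p)) powr (-alpha) < cS * (fst p + snd p) powr (-alpha)"
        using balance cM0 cS0 by (smt (verit) mult_strict_left_mono)
      then show False using g.LB[OF x pos] lt Sf0 T_def by linarith
    qed
  qed
  have part3: "B_free alpha Nm Nf lamS B1 + B_free alpha Nm Nf lamS B2
        = eps_param alpha lamS * Nf * (B1 + B2) / (eps_param alpha lamS * Nf + Nm)"
    unfolding B_free_def by (simp add: add_divide_distrib[symmetric] algebra_simps)
  show ?thesis using part1 part2 part3 by blast
qed

end
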